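(* Let $[X,d,m]$ be a metric random walk space with invariant probability measure $\nu$. Then $[X,d,m]$ with $\nu$ is $m$-connected if and only if $\nu$ is ergodic.
   Context: A metric random walk space $[X,d,m]$ is a Polish metric space $(X,d)$ with a family $m=(m_x)_{x\in X}$ of Borel probability measures, $x\mapsto m_x(A)$ Borel measurable, each with finite first moment. A Radon measure $\nu$ is invariant if $\nu(A)=\int_X m_x(A)d\nu(x)$ for all $\nu$-measurable $A$. Iterates $m_x^{*1}=m_x$, $m_x^{*n}(A)=\int_X m_z(A)dm_x^{*(n-1)}(z)$; $N^m_D=\{x:m_x^{*n}(D)=0\ \forall n\in\mathbb N\}$. The space is $m$-connected if $\nu(N^m_D)=0$ for every $\nu$-measurable $D$ with $0<\nu(D)<\infty$. A Borel set $B$ is invariant for $m$ if $m_x(B)=1$ for every $x\in B$; the invariant probability measure $\nu$ is ergodic if $\nu(B)\in\{0,1\}$ for every invariant set $B$. *)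

theory Defs
  imports "HOL-Probability.Probability"
begin

definition mrw_space :: "('a::polish_space \<Rightarrow> 'a measure) \<Rightarrow> bool" where
  "mrw_space m \<longleftrightarrow>
     (\<forall>x. prob_space (m x) \<and> sets (m x) = sets borel) \<and>
     (\<forall>A \<in> sets borel. (\<lambda>x. emeasure (m x) A) \<in> borel_measurable borel) \<and>
     (\<forall>x. integrable (m x) (\<lambda>y. dist x y))"

text \<open>Iterates: m_iter m k x is m_x^{*(k+1)}; m_x^{*1} = m_x and
  m_x^{*(n+1)}(A) = \<integral> m_z(A) dm_x^{*n}(z), i.e. the bind of m_x^{*n} with the kernel m.\<close>
fun m_iter :: "('a \<Rightarrow> 'a measure) \<Rightarrow> nat \<Rightarrow> 'a \<Rightarrow> 'a measure" where
  "m_iter m 0 x = m x"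
| "m_iter m (Suc k) x = bind (m_iter m k x) m"

definition N_set :: "('a \<Rightarrow> 'a measure) \<Rightarrow> 'a set \<Rightarrow> 'a set" where
  "N_set m D = {x. \<forall>k. emeasure (m_iter m k x) D = 0}"

text \<open>Invariant probability measure nu (Borel; on a Polish space finite Borel
  measures are Radon).\<close>
definition invariant_prob :: "('a::polish_space \<Rightarrow> 'a measure) \<Rightarrow> 'a measure \<Rightarrow> bool" where
  "invariant_prob m \<nu> \<longleftrightarrow> prob_space \<nu> \<and> sets \<nu> = sets borel \<and>
     (\<forall>A \<in> sets borel. emeasure \<nu> A = (\<integral>\<^sup>+ x. emeasure (m x) A \<partial>\<nu>))"

definition m_connected :: "('a::polish_space \<Rightarrow> 'a measure) \<Rightarrow> 'a measure \<Rightarrow> bool" where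
  "m_connected m \<nu> \<longleftrightarrow>
     (\<forall>D \<in> sets borel. 0 < emeasure \<nu> D \<and> emeasure \<nu> D < \<infinity> \<longrightarrow> N_set m D \<in> null_sets \<nu>)"

definition invariant_set :: "('a::polish_space \<Rightarrow> 'a measure) \<Rightarrow> 'a set \<Rightarrow> bool" where
  "invariant_set m B \<longleftrightarrow> B \<in> sets borel \<and> (\<forall>x\<in>B. emeasure (m x) B = 1)"

definition ergodic :: "('a::polish_space \<Rightarrow> 'a measure) \<Rightarrow> 'a measure \<Rightarrow> bool" where
  "ergodic m \<nu> \<longleftrightarrow> (\<forall>B. invariant_set m B \<longrightarrow> emeasure \<nu> B = 0 \<or> emeasure \<nu> B = 1)"

end

theory Submission
  imports Defs
begin

lemma kernel_meas:
  assumes "mrw_space m"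
  shows "m \<in> measurable borel (subprob_algebra borel)"
  using assms unfolding mrw_space_def
  by (intro measurable_subprob_algebra) (auto simp: prob_space_imp_subprob_space)

lemma iter_meas:
  assumes "mrw_space m"
  shows "m_iter m k \<in> measurable borel (subprob_algebra borel)"
proof (induction k)
  case 0 then show ?case using kernel_meas[OF assms] by (simp add: comp_def)
next
  case (Suc k)
  have "(\<lambda>x. bind (m_iter m k x) m) \<in> measurable borel (subprob_algebra borel)"
    by (rule measurable_bind2[OF Suc kernel_meas[OF assms]])
  then show ?case by simp
qed

lemma iter_sets:
  assumes "mrw_space m"
  shows "sets (m_iter m k x) = sets borel"
  using measurable_space[OF iter_meas[OF assms], of x] by (simp add: space_subprob_algebra)

lemma iter_bind:
  assumes "mrw_space m" "A \<in> sets borel"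
  shows "emeasure (m_iter m (Suc k) x) A = (\<integral>\<^sup>+ z. emeasure (m z) A \<partial>(m_iter m k x))"
proof -
  have "m \<in> measurable (m_iter m k x) (subprob_algebra borel)"
    using kernel_meas[OF assms(1)] measurable_cong_sets[OF iter_sets[OF assms(1)] refl] by blast
  moreover have "space (m_iter m k x) \<noteq> {}"
    using sets_eq_imp_space_eq[OF iter_sets[OF assms(1)]] by simp
  ultimately show ?thesis using emeasure_bind assms(2) by simp
qed

lemma iter_first:
  assumes "mrw_space m"
  shows "m_iter m (Suc k) x = bind (m x) (m_iter m k)"
proof (induction k)
  case 0 then show ?case by simp
next
  case (Suc k)
  have f: "m_iter m k \<in> measurable (m x) (subprob_algebra borel)"
    using iter_meas[OF assms] measurable_cong_sets[of "m x" borel] assms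
    unfolding mrw_space_def by blast
  have "m_iter m (Suc (Suc k)) x = bind (bind (m x) (m_iter m k)) m"
    using Suc by simp
  also have "\<dots> = bind (m x) (\<lambda>z. bind (m_iter m k z) m)"
    by (rule bind_assoc[OF f kernel_meas[OF assms]])
  also have "\<dots> = bind (m x) (m_iter m (Suc k))"
    by (rule arg_cong[where f="bind (m x)"]) (simp add: fun_eq_iff)
  finally show ?case .
qed

lemma iter_first_emeasure:
  assumes "mrw_space m" "A \<in> sets borel"
  shows "emeasure (m_iter m (Suc k) x) A = (\<integral>\<^sup>+ z. emeasure (m_iter m k z) A \<partial>(m x))"
proof -
  have f: "m_iter m k \<in> measurable (m x) (subprob_algebra borel)"
  proof -
    have sx: "sets (m x) = sets borel" using assms(1) unfolding mrw_space_def by blast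
    show ?thesis by (subst measurable_cong_sets[OF sx refl]) (rule iter_meas[OF assms(1)])
  qed
  have sx: "sets (m x) = sets borel" using assms(1) unfolding mrw_space_def by blast
  have "space (m x) \<noteq> {}"
    using sets_eq_imp_space_eq[OF sx] by simp
  then show ?thesis unfolding iter_first[OF assms(1)] using emeasure_bind[OF _ f assms(2)] by simp
qed

lemma iter_emeasure_meas:
  assumes "mrw_space m" "A \<in> sets borel"
  shows "(\<lambda>x. emeasure (m_iter m k x) A) \<in> borel_measurable borel"
  using measurable_comp[OF iter_meas[OF assms(1)] measurable_emeasure_subprob_algebra[OF assms(2)]]
  by (simp add: comp_def)

lemma N_set_borel:
  assumes "mrw_space m" "A \<in> sets borel"
  shows "N_set m A \<in> sets borel"
proof -
  have "N_set m A = (\<Inter>k. {x\<in>space borel. emeasure (m_iter m k x) A = 0})"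
    unfolding N_set_def by auto
  also have "\<dots> \<in> sets borel"
    using iter_emeasure_meas[OF assms] by measurable
  finally show ?thesis .
qed

lemma dir1:
  fixes m :: "'a::polish_space \<Rightarrow> 'a measure" and \<nu> :: "'a measure"
  assumes "mrw_space m"
    and "invariant_prob m \<nu>"
    and mc: "m_connected m \<nu>"
  shows "ergodic m \<nu>"
proof -
  have pm: "\<And>x. prob_space (m x)" and sm: "\<And>x. sets (m x) = sets borel"
    using assms(1) unfolding mrw_space_def by auto
  have pn: "prob_space \<nu>" and sn: "sets \<nu> = sets borel"
    and inv: "\<And>A. A \<in> sets borel \<Longrightarrow> emeasure \<nu> A = (\<integral>\<^sup>+ x. emeasure (m x) A \<partial>\<nu>)"
    using assms(2) unfolding invariant_prob_def by auto
  have finm: "emeasure (m x) A \<noteq> \<infinity>" for x A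
    using prob_space.emeasure_le_1[OF pm, of x A] by (auto simp: top_unique)
  have finn: "emeasure \<nu> A \<noteq> \<infinity>" for A
    using prob_space.emeasure_le_1[OF pn, of A] by (auto simp: top_unique)
  have spn: "space \<nu> = UNIV" using sets_eq_imp_space_eq[OF sn] by simp
  have spm: "\<And>x. space (m x) = UNIV" using sets_eq_imp_space_eq[OF sm] by simp
  have spi: "\<And>k x. space (m_iter m k x) = UNIV"
    using sets_eq_imp_space_eq[OF iter_sets[OF assms(1)]] by simp
  show "ergodic m \<nu>"
    unfolding ergodic_def
  proof (intro allI impI)
    fix B assume ib: "invariant_set m B"
    then have Bb: "B \<in> sets borel" and Bx: "\<And>x. x \<in> B \<Longrightarrow> emeasure (m x) B = 1"
      unfolding invariant_set_def by auto
    have cB: "- B \<in> sets borel" using Bb by auto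
    have mx0: "emeasure (m x) (- B) = 0" if "x \<in> B" for x
    proof -
      have "emeasure (m x) (space (m x) - B) = emeasure (m x) (space (m x)) - emeasure (m x) B"
        by (rule emeasure_compl) (use Bb sm finm in auto)
      then show ?thesis using Bx[OF that] prob_space.emeasure_space_1[OF pm] spm
        by (simp add: Compl_eq_Diff_UNIV)
    qed
    have sub: "B \<subseteq> N_set m (- B)"
    proof
      fix x assume xB: "x \<in> B"
      have "emeasure (m_iter m k x) (- B) = 0" for k
      proof (induction k)
        case 0 then show ?case using mx0[OF xB] by simp
      next
        case (Suc k)
        have ae: "AE z in m_iter m k x. z \<in> B"
          using Suc AE_iff_measurable[of "-B" "m_iter m k x" "\<lambda>z. z \<in> B"] cB
            iter_sets[OF assms(1)] spi by auto
        have "emeasure (m_iter m (Suc k) x) (- B) = (\<integral>\<^sup>+ z. emeasure (m z) (- B) \<partial>(m_iter m k x))"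
          by (rule iter_bind[OF assms(1) cB])
        also have "\<dots> = (\<integral>\<^sup>+ z. 0 \<partial>(m_iter m k x))"
          by (rule nn_integral_cong_AE) (use ae mx0 in auto)
        finally show ?case by simp
      qed
      then show "x \<in> N_set m (- B)" unfolding N_set_def by auto
    qed
    show "emeasure \<nu> B = 0 \<or> emeasure \<nu> B = 1"
    proof (rule ccontr)
      assume h: "\<not> (emeasure \<nu> B = 0 \<or> emeasure \<nu> B = 1)"
      have fin: "emeasure \<nu> B \<noteq> \<infinity>" using finn .
      have "emeasure \<nu> (space \<nu> - B) = emeasure \<nu> (space \<nu>) - emeasure \<nu> B"
        by (rule emeasure_compl) (use Bb sn fin in auto)
      then have c: "emeasure \<nu> (- B) = 1 - emeasure \<nu> B"
        using prob_space.emeasure_space_1[OF pn] spn by (simp add: Compl_eq_Diff_UNIV)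
      have le1: "emeasure \<nu> B \<le> 1" using prob_space.emeasure_le_1[OF pn] .
      have lt: "emeasure \<nu> B < 1" using le1 h by auto
      have pos: "0 < emeasure \<nu> (- B)" unfolding c by (rule diff_gr0_ennreal[OF lt])
      have fin2: "emeasure \<nu> (- B) < \<infinity>" using finn[of "- B"] by (simp add: less_top)
      have nul: "N_set m (- B) \<in> null_sets \<nu>"
        using mc cB pos fin2 unfolding m_connected_def by simp
      have "B \<in> sets \<nu>" using Bb sn by simp
      then have "B \<in> null_sets \<nu>" using null_sets_subset[OF nul _ sub] by simp
      then show False using h null_setsD1 by blast
    qed
  qed
qed

lemma dir2:
  fixes m :: "'a::polish_space \<Rightarrow> 'a measure" and \<nu> :: "'a measure"
  assumes "mrw_space m"
    and "invariant_prob m \<nu>"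
    and erg: "ergodic m \<nu>"
  shows "m_connected m \<nu>"
proof -
  have pm: "\<And>x. prob_space (m x)" and sm: "\<And>x. sets (m x) = sets borel"
    using assms(1) unfolding mrw_space_def by auto
  have pn: "prob_space \<nu>" and sn: "sets \<nu> = sets borel"
    and inv: "\<And>A. A \<in> sets borel \<Longrightarrow> emeasure \<nu> A = (\<integral>\<^sup>+ x. emeasure (m x) A \<partial>\<nu>)"
    using assms(2) unfolding invariant_prob_def by auto
  have finm: "emeasure (m x) A \<noteq> \<infinity>" for x A
    using prob_space.emeasure_le_1[OF pm, of x A] by (auto simp: top_unique)
  have finn: "emeasure \<nu> A \<noteq> \<infinity>" for A
    using prob_space.emeasure_le_1[OF pn, of A] by (auto simp: top_unique)
  have spn: "space \<nu> = UNIV" using sets_eq_imp_space_eq[OF sn] by simp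
  have spm: "\<And>x. space (m x) = UNIV" using sets_eq_imp_space_eq[OF sm] by simp
  have spi: "\<And>k x. space (m_iter m k x) = UNIV"
    using sets_eq_imp_space_eq[OF iter_sets[OF assms(1)]] by simp
  show "m_connected m \<nu>"
    unfolding m_connected_def
  proof (intro ballI impI)
    fix D assume Db: "D \<in> sets borel" and Dpos: "0 < emeasure \<nu> D \<and> emeasure \<nu> D < \<infinity>"
    define N where "N = N_set m D"
    have Nb: "N \<in> sets borel" unfolding N_def by (rule N_set_borel[OF assms(1) Db])
    have Nx: "emeasure (m x) N = 1" if xN: "x \<in> N" for x
    proof -
      have "AE z in m x. emeasure (m_iter m k z) D = 0" for k
      proof -
        have "(\<integral>\<^sup>+ z. emeasure (m_iter m k z) D \<partial>(m x)) = 0"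
        proof -
          have h: "emeasure (m_iter m (Suc k) x) D = 0" using xN unfolding N_def N_set_def by blast
          have eq: "emeasure (m_iter m (Suc k) x) D = (\<integral>\<^sup>+ z. emeasure (m_iter m k z) D \<partial>(m x))"
            by (rule iter_first_emeasure[OF assms(1) Db])
          show ?thesis using h unfolding eq .
        qed
        moreover have "(\<lambda>z. emeasure (m_iter m k z) D) \<in> borel_measurable (m x)"
          by (subst measurable_cong_sets[OF sm[of x] refl]) (rule iter_emeasure_meas[OF assms(1) Db])
        ultimately show ?thesis by (simp add: nn_integral_0_iff_AE)
      qed
      then have "AE z in m x. \<forall>k. emeasure (m_iter m k z) D = 0"
        by (simp add: AE_all_countable)
      then have "AE z in m x. z \<in> N" unfolding N_def N_set_def by (simp only: mem_Collect_eq)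
      moreover have "N \<in> sets (m x)" using Nb sm[of x] by simp
      ultimately show ?thesis
        using prob_space.emeasure_eq_1_AE[OF pm[of x]] by blast
    qed
    have "invariant_set m N" unfolding invariant_set_def using Nb Nx by blast
    then have "emeasure \<nu> N = 0 \<or> emeasure \<nu> N = 1" using erg unfolding ergodic_def by blast
    moreover have "emeasure \<nu> N \<noteq> 1"
    proof
      assume e1: "emeasure \<nu> N = 1"
      have "{x \<in> space \<nu>. x \<in> N} = N" using spn by simp
      then have "AE x in \<nu>. x \<in> N"
        using prob_space.AE_I_eq_1[OF pn, of "\<lambda>x. x \<in> N"] e1 Nb sn by simp
      then have "AE x in \<nu>. emeasure (m x) D = 0"
      proof (rule AE_mp)
        show "AE x in \<nu>. x \<in> N \<longrightarrow> emeasure (m x) D = 0"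
        proof (intro AE_I2 impI)
          fix x assume "x \<in> N"
          then have "emeasure (m_iter m 0 x) D = 0" unfolding N_def N_set_def by blast
          then show "emeasure (m x) D = 0" by simp
        qed
      qed
      then have "(\<integral>\<^sup>+ x. emeasure (m x) D \<partial>\<nu>) = (\<integral>\<^sup>+ x. 0 \<partial>\<nu>)"
        by (rule nn_integral_cong_AE)
      then have "emeasure \<nu> D = 0" using inv[OF Db] by simp
      then show False using Dpos by simp
    qed
    ultimately have "emeasure \<nu> N = 0" by blast
    moreover have "N \<in> sets \<nu>" using Nb sn by simp
    ultimately show "N_set m D \<in> null_sets \<nu>" unfolding N_def by (simp add: null_sets_def)
  qed
qed

theorem theorem2p19:
  fixes m :: "'a::polish_space \<Rightarrow> 'a measure" and \<nu> :: "'a measure"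
  assumes "mrw_space m"
    and "invariant_prob m \<nu>"
  shows "m_connected m \<nu> \<longleftrightarrow> ergodic m \<nu>"
  using dir1[OF assms] dir2[OF assms] by blast

end
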